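(* Let $k\ge 2$ and let $f\in\mathcal{GB}_n^{2^k}$ be given by $f(\mathbf{x})=g(\mathbf{x})+2h(\mathbf{x})$ with $g\in\mathcal{B}_n$ and $h\in\mathcal{GB}_n^{2^{k-1}}$. Consider the statements (i) $f$ is gbent in $\mathcal{GB}_n^{2^k}$; (ii) $h$ and $h+2^{k-2}g$ are both gbent in $\mathcal{GB}_n^{2^{k-1}}$, and $\Im\big(\overline{\mathcal{H}^{(2^{k-1})}_h(\mathbf{u})}\,\mathcal{H}^{(2^{k-1})}_{h+2^{k-2}g}(\mathbf{u})\big)=0$ for all $\mathbf{u}\in\mathbb{F}_2^n$. If $n$ is even, (i) and (ii) are equivalent. If $n$ is odd, (ii) implies (i).
   Context: $\mathcal{B}_n$: Boolean functions $\mathbb{F}_2^n\to\mathbb{F}_2$; $\mathcal{GB}_n^q$: functions $\mathbb{F}_2^n\to\mathbb{Z}_q$ (Boolean values viewed as integers; $g+2h$ computed in $\mathbb{Z}_{2^k}$, $h+2^{k-2}g$ in $\mathbb{Z}_{2^{k-1}}$). $\mathcal{H}^{(q)}_f(\mathbf{u})=\sum_{\mathbf{x}\in\mathbb{F}_2^n}\zeta_q^{f(\mathbf{x})}(-1)^{\mathbf{u}\cdot\mathbf{x}}$ with $\zeta_q=e^{2\pi i/q}$ (for $q=2$ this is the ordinary Walsh–Hadamard transform); $f\in\mathcal{GB}_n^q$ is gbent if $|\mathcal{H}^{(q)}_f(\mathbf{u})|=2^{n/2}$ for all $\mathbf{u}$ (for $q=2$: bent). $\Im(z)$ is the imaginary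 part and $\bar z$ the complex conjugate. *)

theory Defs
  imports Complex_Main
begin

text \<open>Vectors of F_2^n are represented as boolean lists of length n.\<close>
definition vecs :: "nat \<Rightarrow> bool list set" where
  "vecs n = {x. length x = n}"

text \<open>Inner product u.x in F_2, as a natural number (only its parity matters).\<close>
definition dotp :: "bool list \<Rightarrow> bool list \<Rightarrow> nat" where
  "dotp u x = length (filter id (map2 (\<and>) u x))"

definition zeta :: "nat \<Rightarrow> complex" where
  "zeta q = exp (2 * of_real pi * \<i> / of_nat q)"

definition walsh :: "nat \<Rightarrow> nat \<Rightarrow> (bool list \<Rightarrow> int) \<Rightarrow> bool list \<Rightarrow> complex" where
  "walsh n q f u = (\<Sum>x\<in>vecs n. zeta q powi f x * (-1) ^ dotp u x)"

definition gbent :: "nat \<Rightarrow> nat \<Rightarrow> (bool list \<Rightarrow> int) \<Rightarrow> bool" where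
  "gbent n q f \<longleftrightarrow> (\<forall>u\<in>vecs n. cmod (walsh n q f u) = 2 powr (real n / 2))"

end

theory Submission
  imports Defs "HOL-Computational_Algebra.Polynomial"
begin


definition z :: "nat \<Rightarrow> complex" where "z k = zeta (2^k)"

lemma z_cis: "z k = cis (2*pi / 2^k)"
  unfolding z_def zeta_def cis_conv_exp by (simp add: field_simps)

lemma z_pow: "z k ^ j = cis (2*pi*j / 2^k)"
  by (simp add: z_cis DeMoivre field_simps)

lemma z_sq: "z (Suc k)^2 = z k"
  unfolding z_pow by (simp add: z_cis field_simps)

lemma z_order: "z k ^ (2^k) = 1"
  by (simp add: z_pow)

lemma z_half: "z (Suc k) ^ (2^k) = -1"
  by (simp add: z_pow)

lemma z_nz: "z k \<noteq> 0" by (simp add: z_cis)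
lemma z_norm: "cmod (z k) = 1" by (simp add: z_cis)

lemma z_cnj: "cnj (z k) = z k ^ (2^k - 1)"
proof -
  have "z k * z k ^ (2^k - 1) = 1"
    by (metis power_Suc Suc_pred' z_order zero_less_power zero_less_numeral)
  moreover have "z k * cnj (z k) = 1"
    using z_norm[of k] by (metis complex_norm_square mult.commute of_real_1 power_one)
  ultimately show ?thesis using z_nz[of k]
    by (metis mult_left_cancel)
qed

lemma z_pow_ne1: assumes "0 < e" "e < 2^k" shows "z k ^ e \<noteq> 1"
proof
  assume "z k ^ e = 1"
  hence "Re (cis (2*pi*e/2^k)) = 1" unfolding z_pow by simp
  hence "cos (2*pi*e/2^k) = 1" by simp
  then obtain n :: int where n: "2*pi*e/2^k = real_of_int n * 2 * pi"
    using cos_one_2pi_int by blast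
  have "0 < 2*pi*e/2^k" using assms by simp
  with n have "0 < real_of_int n*2*pi" by simp
  hence "0 < n" by (simp add: zero_less_mult_iff)
  have "2*pi*e/2^k < 2*pi" using assms by (simp add: field_simps)
  with n have "real_of_int n*2*pi < 1*2*pi" by simp
  hence "n < 1" by (simp only: mult_less_cancel_right) simp
  with \<open>0 < n\<close> show False by simp
qed



definition ev :: "int poly \<Rightarrow> complex \<Rightarrow> complex" where
  "ev p x = poly (map_poly of_int p) x"

lemma ev_pCons[simp]: "ev (pCons a p) x = of_int a + x * ev p x"
  by (simp add: ev_def map_poly_pCons)
lemma ev_0[simp]: "ev 0 x = 0" by (simp add: ev_def)
lemma map_poly_of_int_add: "map_poly (of_int::int\<Rightarrow>complex) (p + q) = map_poly of_int p + map_poly of_int q"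
  by (rule poly_eqI) (simp add: coeff_map_poly)
lemma ev_add[simp]: "ev (p + q) x = ev p x + ev q x"
  unfolding ev_def by (simp add: map_poly_of_int_add)
lemma ev_const[simp]: "ev [:c:] x = of_int c" by simp
lemma ev_1[simp]: "ev 1 x = 1" by (simp add: one_pCons)
lemma ev_minus[simp]: "ev (- p) x = - ev p x"
  by (induction p rule: pCons_induct) (auto simp: algebra_simps)
lemma ev_diff[simp]: "ev (p - q) x = ev p x - ev q x"
  using ev_add[of p "-q" x] by simp
lemma ev_smult[simp]: "ev (smult c p) x = of_int c * ev p x"
  by (induction p rule: pCons_induct) (auto simp: algebra_simps)
lemma ev_mult[simp]: "ev (p * q) x = ev p x * ev q x"
  by (induction p rule: pCons_induct) (auto simp: algebra_simps)
lemma ev_power[simp]: "ev (p ^ n) x = ev p x ^ n"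
  by (induction n) auto
lemma ev_monom[simp]: "ev (monom c n) x = of_int c * x ^ n"
  by (simp add: ev_def map_poly_monom poly_monom)
lemma ev_sum: "ev (\<Sum>i\<in>A. p i) x = (\<Sum>i\<in>A. ev (p i) x)"
  by (induction A rule: infinite_finite_induct) auto
lemma ev_pcompose: "ev (pcompose p q) x = ev p (ev q x)"
  by (induction p rule: pCons_induct) (auto simp: pcompose_pCons)
lemma ev_of_int: "ev p (of_int a) = of_int (poly p a)"
  by (induction p rule: pCons_induct) auto
lemma ev_at1: "ev p 1 = of_int (poly p 1)"
  using ev_of_int[of p 1] by simp
lemma ev_cnj: "ev p (cnj x) = cnj (ev p x)"
  by (induction p rule: pCons_induct) auto
lemma ev_sum_coeff: assumes "degree p < N"
  shows "ev p x = (\<Sum>i<N. of_int (coeff p i) * x ^ i)"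
proof -
  have "ev p x = (\<Sum>i\<le>degree p. of_int (coeff p i) * x ^ i)"
    unfolding ev_def poly_altdef by (simp add: coeff_map_poly degree_map_poly)
  also have "\<dots> = (\<Sum>i<N. of_int (coeff p i) * x ^ i)"
    using assms by (intro sum.mono_neutral_left) (auto simp: coeff_eq_0)
  finally show ?thesis .
qed

lemma sum_to_ev: "(\<Sum>i<N. of_int (c i) * x ^ i) = ev (\<Sum>i<N. monom (c i) i) x"
  by (simp add: ev_sum)

lemma coeff_sum_monom: "j < N \<Longrightarrow> coeff (\<Sum>i<N. monom (c i) i) j = c j"
  by (simp add: coeff_sum)

lemma degree_sum_monom: "0 < N \<Longrightarrow> degree (\<Sum>i<N. monom (c i) i) < N"
proof -
  assume N: "0 < N"
  have "degree (\<Sum>i<N. monom (c i) i) \<le> N - 1"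
    by (intro degree_sum_le) (auto simp: degree_monom_le intro: order.trans[OF degree_monom_le])
  with N show ?thesis by simp
qed

lemma reduce:
  fixes p :: "int poly"
  assumes m: "0 < m"
  shows "\<exists>q r. p = (monom 1 m + 1) * q + r \<and> degree r < m"
  using assms
proof (induction "degree p" arbitrary: p rule: less_induct)
  case less
  show ?case
  proof (cases "degree p < m")
    case True
    then show ?thesis by (rule_tac x=0 in exI, rule_tac x=p in exI) simp
  next
    case False
    define d where "d = degree p"
    define c where "c = lead_coeff p"
    define p' where "p' = p - monom c d - monom c (d - m)"
    have eq: "monom c (d - m) * (monom 1 m + 1) = monom c d + monom c (d - m)"
      using False m by (simp add: distrib_left mult_monom d_def)
    have dle: "degree p' \<le> d"
      unfolding p'_def d_def
      by (intro degree_diff_le) (auto intro: order.trans[OF degree_monom_le])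
    have c0: "coeff p' d = 0"
      using False m by (simp add: p'_def c_def d_def coeff_monom)
    have dpos: "0 < d" using False m d_def by simp
    have "degree p' < d"
    proof (rule ccontr)
      assume "\<not> degree p' < d"
      with dle have "degree p' = d" by simp
      with c0 have "p' = 0" by (metis leading_coeff_0_iff)
      with \<open>degree p' = d\<close> dpos show False by simp
    qed
    then obtain q r where qr: "p' = (monom 1 m + 1) * q + r" "degree r < m"
      using less(1)[of p'] m d_def by blast
    have "p = (monom 1 m + 1) * (q + monom c (d - m)) + r"
      using qr(1) eq unfolding p'_def by (simp add: algebra_simps)
    with qr(2) show ?thesis by blast
  qed
qed




definition LI :: "nat \<Rightarrow> bool" where
  "LI K \<longleftrightarrow> (\<forall>a::nat\<Rightarrow>int. (\<Sum>j<2^K. of_int (a j) * z (Suc K) ^ j) = 0 \<longrightarrow> (\<forall>j<2^K. a j = 0))"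

lemma divall: fixes c :: int assumes dv: "\<And>b. (2::int)^b dvd c" shows "c = 0"
proof (rule ccontr)
    assume c: "c \<noteq> 0"
    define b where "b = nat \<bar>c\<bar>"
    obtain e where e: "c = 2^b * e" using dv by blast
    have "e \<noteq> 0" using c e by auto
    have ab: "\<bar>c\<bar> = 2^b * \<bar>e\<bar>" using e by (simp add: abs_mult)
    have "(2::int)^b * 1 \<le> 2^b * \<bar>e\<bar>" using \<open>e \<noteq> 0\<close> by (intro mult_left_mono) auto
    hence 1: "\<bar>c\<bar> \<ge> 2^b" using ab by linarith
    have "b < 2^b" by (rule less_exp)
    hence "int b < int (2^b)" by (simp only: of_nat_less_iff)
    hence 2: "int b < 2^b" by simp
    have 3: "int b = \<bar>c\<bar>" unfolding b_def by simp
    from 1 2 3 show False by simp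
qed

locale lvl = fixes K :: nat assumes LI: "LI K"
begin

abbreviation "zz \<equiv> z (Suc K)"
abbreviation "m \<equiv> (2::nat)^K"
abbreviation "pp \<equiv> 1 - zz"
abbreviation "D \<equiv> (monom 1 m + 1 :: int poly)"
abbreviation "P \<equiv> [:1, -1:] :: int poly"

lemma m_pos: "0 < m" by simp
lemma zz_m: "zz ^ m = -1" by (rule z_half)
lemma zz_2m: "zz ^ (2*m) = 1" using z_order[of "Suc K"] by simp
lemma ev_D: "ev D zz = 0" by (simp add: zz_m)
lemma ev_P: "ev P zz = pp" by simp
lemma zz_ne1: "zz \<noteq> 1"
proof -
  have "(1::nat) < 2^Suc K" by (metis one_less_numeral_iff one_less_power semiring_norm(76) zero_less_Suc)
  thus ?thesis using z_pow_ne1[of 1 "Suc K"] by simp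
qed
lemma pp_nz: "pp \<noteq> 0" using zz_ne1 by simp
lemma cnj_zz: "cnj zz = zz ^ (2*m - 1)" using z_cnj[of "Suc K"] by simp
lemma zz_nz: "zz \<noteq> 0" by (rule z_nz)

lemma LIp: assumes "degree r < m" "ev r zz = 0" shows "r = 0"
proof -
  have "(\<Sum>i<m. of_int (coeff r i) * zz ^ i) = 0"
    using ev_sum_coeff[OF assms(1)] assms(2) by simp
  with LI have "\<forall>j<m. coeff r j = 0" unfolding LI_def by blast
  moreover have "\<forall>j\<ge>m. coeff r j = 0" using assms(1) by (auto intro: coeff_eq_0)
  ultimately show ?thesis by (metis leI poly_eqI coeff_0)
qed

lemma F2: assumes "ev p zz = 0" shows "\<exists>q. p = D * q"
proof -
  obtain q r where qr: "p = D * q + r" "degree r < m" using reduce[OF m_pos, of p] by blast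
  have "ev r zz = ev p zz - ev D zz * ev q zz" using qr(1) by simp
  hence "ev r zz = 0" using assms ev_D by simp
  with qr LIp have "r = 0" by blast
  with qr show ?thesis by auto
qed

lemma F3: assumes "ev p zz = 0" shows "even (poly p 1)"
proof -
  obtain q where "p = D * q" using F2[OF assms] by blast
  hence "poly p 1 = 2 * poly q 1" by (simp add: poly_monom)
  thus ?thesis by simp
qed

lemma F10: assumes "odd t" "ev p zz = 0" shows "ev p (zz ^ t) = 0"
proof -
  obtain q where "p = D * q" using F2[OF assms(2)] by blast
  moreover have "(zz ^ t) ^ m = -1"
  proof -
    have "(zz ^ t) ^ m = (zz ^ m) ^ t" by (simp only: power_mult[symmetric] mult.commute)
    also have "\<dots> = -1" using assms(1) zz_m by simp
    finally show ?thesis .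
  qed
  ultimately show ?thesis by simp
qed

lemma F4: assumes "even (poly p 1)" shows "\<exists>q. ev p zz = pp * ev q zz"
proof -
  obtain t where t: "poly p 1 = 2 * t" using assms by blast
  define s where "s = synthetic_div p 1"
  have ps: "p = [:-1, 1:] * s + [:2 * t:]" using synthetic_div_correct'[of 1 p] t s_def by simp
  define S where "S = (\<Sum>i<m. monom 1 i :: int poly)"
  have "1 - zz ^ m = pp * (\<Sum>i<m. zz ^ i)" by (rule one_diff_power_eq)
  hence two: "2 = pp * ev S zz" using zz_m by (simp add: S_def ev_sum)
  have "ev p zz = (zz - 1) * ev s zz + 2 * of_int t" by (subst ps) (simp add: algebra_simps)
  also have "\<dots> = pp * ev (smult t S - s) zz" by (subst two) (simp add: algebra_simps)
  finally show ?thesis by blast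
qed

lemma F5: assumes "ev p zz = pp * ev q zz" shows "even (poly p 1)"
proof -
  have "ev (p - P * q) zz = 0" using assms by (simp add: algebra_simps)
  from F3[OF this] show ?thesis by simp
qed


lemma F7aux: "\<exists>y. pp ^ (2^r) = 1 + zz ^ (2^r) + 2 * ev y zz \<and> odd (poly y 1)"
proof (induction r)
  case 0
  show ?case by (rule exI[of _ "[:0,-1:]"]) (simp add: algebra_simps)
next
  case (Suc r)
  then obtain y where y: "pp ^ (2^r) = 1 + zz ^ (2^r) + 2 * ev y zz" "odd (poly y 1)" by blast
  define y' where "y' = monom 1 (2^r) + smult 2 ((1 + monom 1 (2^r)) * y) + smult 2 (y^2)"
  have "pp ^ (2^Suc r) = (pp ^ (2^r))^2" by (simp add: power_mult[symmetric] mult.commute)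
  also have "\<dots> = 1 + zz ^ (2^Suc r) + 2 * ev y' zz"
    unfolding y y'_def by (simp add: power2_eq_square algebra_simps power_add[symmetric] mult_2[symmetric])
  finally show ?case using y(2) by (intro exI[of _ y']) (auto simp: y'_def poly_monom)
qed

lemma F7: "\<exists>y. pp ^ m = 2 * ev y zz \<and> odd (poly y 1)"
  using F7aux[of K] zz_m by auto

lemma F6: assumes "\<forall>a. \<exists>q. w = pp ^ a * ev q zz" "w = ev h zz" shows "w = 0"
proof -
  obtain q0 r where qr: "h = D * q0 + r" "degree r < m" using reduce[OF m_pos, of h] by blast
  have wr: "w = ev r zz" using assms(2) qr(1) ev_D by simp
  obtain y where y: "pp ^ m = 2 * ev y zz" using F7 by blast
  have dv: "(2::int)^b dvd coeff r j" for b j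
  proof -
    obtain q where q: "w = pp ^ (m*b) * ev q zz" using assms(1) by blast
    hence w2: "w = ev (smult (2^b) (y^b * q)) zz" by (simp add: power_mult y power_mult_distrib)
    obtain q1 s where qs: "y^b * q = D * q1 + s" "degree s < m" using reduce[OF m_pos, of "y^b*q"] by blast
    have "ev (y^b*q) zz = ev s zz" using qs(1) ev_D by simp
    hence "ev (r - smult (2^b) s) zz = 0" using w2 wr by simp
    moreover have "degree (r - smult (2^b) s) < m"
      using qr(2) qs(2) degree_smult_le[of "2^b" s] by (intro degree_diff_less) auto
    ultimately have "r - smult (2^b) s = 0" using LIp by blast
    hence "r = smult (2^b) s" by simp
    thus ?thesis by simp
  qed
  have "coeff r j = 0" for j using dv by (rule divall)
  hence "r = 0" by (simp add: poly_eqI)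
  with wr show ?thesis by simp
qed

lemma F8: assumes "w = ev h zz" "w \<noteq> 0" shows "\<exists>a u. w = pp ^ a * ev u zz \<and> odd (poly u 1)"
proof -
  have "\<exists>a. \<not> (\<exists>q. w = pp ^ a * ev q zz)" using F6 assms by blast
  define a0 where "a0 = (LEAST a. \<not> (\<exists>q. w = pp ^ a * ev q zz))"
  have a0: "\<not> (\<exists>q. w = pp ^ a0 * ev q zz)" unfolding a0_def
    by (rule LeastI_ex) fact
  have "a0 \<noteq> 0"
  proof
    assume "a0 = 0"
    with a0 assms(1) show False by auto
  qed
  then obtain a1 where a1: "a0 = Suc a1" by (cases a0) auto
  have "\<exists>q. w = pp ^ a1 * ev q zz"
    using not_less_Least[of a1 "\<lambda>a. \<not> (\<exists>q. w = pp ^ a * ev q zz)"] a1 unfolding a0_def by auto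
  then obtain u where u: "w = pp ^ a1 * ev u zz" by blast
  have "odd (poly u 1)"
  proof
    assume "even (poly u 1)"
    then obtain q where "ev u zz = pp * ev q zz" using F4 by blast
    with u a0 a1 show False by (auto simp: mult.assoc)
  qed
  with u show ?thesis by blast
qed

end



lemma sum_split2: "(\<Sum>j<2*(n::nat). f j) = (\<Sum>i<n. f (2*i)) + (\<Sum>i<n. (f (2*i+1) :: 'a::comm_monoid_add))"
  by (induction n) (simp_all add: algebra_simps)

context lvl begin

lemma cnj_ev: "cnj (ev p zz) = ev (pcompose p (monom 1 (2*m-1))) zz"
  by (simp add: ev_cnj[symmetric] ev_pcompose cnj_zz)

lemma poly_cmp1: "poly (pcompose (p::int poly) (monom 1 n)) 1 = poly p 1"
proof -
  have "poly (monom (1::int) n) 1 = 1" by (simp add: poly_monom)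
  thus ?thesis by (simp add: poly_pcompose)
qed

lemma SQ_step:
  assumes eq: "(ev a zz)^2 = zz * (ev b zz)^2"
  shows "\<exists>a' b'. ev a zz = pp * ev a' zz \<and> ev b zz = pp * ev b' zz \<and> (ev a' zz)^2 = zz * (ev b' zz)^2"
proof -
  have "ev (a^2 - monom 1 1 * b^2) zz = 0" using eq by simp
  from F3[OF this] have par: "even (poly a 1) = even (poly b 1)" by (simp add: poly_monom)
  show ?thesis
  proof (cases "even (poly a 1)")
    case True
    with par obtain a' b' where ab: "ev a zz = pp * ev a' zz" "ev b zz = pp * ev b' zz"
      using F4 by metis
    have "(pp * ev a' zz)^2 = zz * (pp * ev b' zz)^2" using eq ab by simp
    hence "pp^2 * (ev a' zz)^2 = pp^2 * (zz * (ev b' zz)^2)"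
      by (simp only: power_mult_distrib mult.left_commute)
    hence "(ev a' zz)^2 = zz * (ev b' zz)^2" using pp_nz by simp
    with ab show ?thesis by blast
  next
    case False
    with par have oa: "even (poly (a - 1) 1)" and ob: "even (poly (b - 1) 1)" by auto
    obtain x where x: "ev (a - 1) zz = pp * ev x zz" using F4[OF oa] by blast
    obtain y where y: "ev (b - 1) zz = pp * ev y zz" using F4[OF ob] by blast
    define X where "X = ev x zz"
    define Y where "Y = ev y zz"
    have ea: "ev a zz = 1 + pp * X" using x X_def by (simp add: algebra_simps)
    have eb: "ev b zz = 1 + pp * Y" using y Y_def by (simp add: algebra_simps)
    define w where "w = 1 + smult 2 (x - y) + P * (x^2 - y^2 + smult 2 y) + P^2 * y^2"
    have W: "ev w zz = 1 + 2 * (X - Y) + pp * (X^2 - Y^2 + 2 * Y) + pp^2 * Y^2"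
      by (simp add: w_def X_def Y_def algebra_simps)
    have "pp * ev w zz = (1 + pp * X)^2 - zz * (1 + pp * Y)^2"
      by (simp only: W) (simp add: power2_eq_square algebra_simps)
    hence "pp * ev w zz = (ev a zz)^2 - zz * (ev b zz)^2"
      by (simp only: ea eb)
    hence "pp * ev w zz = 0" using eq by simp
    hence "ev w zz = 0" using pp_nz by simp
    from F3[OF this] have "even (poly w 1)" .
    moreover have "poly w 1 = 1 + 2 * (poly x 1 - poly y 1)" by (simp add: w_def)
    ultimately show ?thesis by simp
  qed
qed

lemma SQ: assumes eq: "(ev a zz)^2 = zz * (ev b zz)^2" shows "ev b zz = 0"
proof -
  have "\<exists>a' b'. ev a zz = pp^n * ev a' zz \<and> ev b zz = pp^n * ev b' zz \<and> (ev a' zz)^2 = zz * (ev b' zz)^2" for n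
  proof (induction n)
    case 0
    then show ?case using eq by (intro exI[of _ a] exI[of _ b]) simp
  next
    case (Suc n)
    then obtain a' b' where ab: "ev a zz = pp^n * ev a' zz" "ev b zz = pp^n * ev b' zz"
        "(ev a' zz)^2 = zz * (ev b' zz)^2" by blast
    from SQ_step[OF ab(3)] obtain a'' b'' where
      "ev a' zz = pp * ev a'' zz" "ev b' zz = pp * ev b'' zz" "(ev a'' zz)^2 = zz * (ev b'' zz)^2" by blast
    with ab show ?case by (intro exI[of _ a''] exI[of _ b'']) (simp add: mult.assoc)
  qed
  hence "\<forall>n. \<exists>q. ev b zz = pp^n * ev q zz" by blast
  from F6[OF this refl] show ?thesis .
qed

lemma LI_Suc: "LI (Suc K)"
  unfolding LI_def
proof (rule allI, rule impI)
  fix a :: "nat \<Rightarrow> int"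
  let ?w = "z (Suc (Suc K))"
  assume h: "(\<Sum>j<2 ^ Suc K. of_int (a j) * ?w ^ j) = 0"
  have w2: "?w^2 = zz" by (rule z_sq)
  define \<alpha> where "\<alpha> = (\<Sum>i<m. of_int (a (2*i)) * zz ^ i)"
  define \<beta> where "\<beta> = (\<Sum>i<m. of_int (a (2*i+1)) * zz ^ i)"
  have "(\<Sum>j<2 ^ Suc K. of_int (a j) * ?w ^ j) = (\<Sum>j<2*m. of_int (a j) * ?w ^ j)" by simp
  also have "\<dots> = (\<Sum>i<m. of_int (a (2*i)) * ?w ^ (2*i)) + (\<Sum>i<m. of_int (a (2*i+1)) * ?w ^ (2*i+1))"
    by (rule sum_split2)
  also have "\<dots> = \<alpha> + ?w * \<beta>"
  proof -
    have pw1: "?w^(2*i) = zz^i" for i by (simp add: power_mult w2)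
    have pw2: "?w^(2*i+1) = ?w * zz^i" for i using pw1[of i] by simp
    show ?thesis unfolding \<alpha>_def \<beta>_def pw1 pw2 by (simp add: sum_distrib_left algebra_simps)
  qed
  finally have "\<alpha> = - ?w * \<beta>" using h by (simp add: eq_neg_iff_add_eq_0)
  hence "\<alpha>^2 = zz * \<beta>^2" by (simp add: power_mult_distrib w2)
  moreover have "\<alpha> = ev (\<Sum>i<m. monom (a (2*i)) i) zz" unfolding \<alpha>_def by (rule sum_to_ev)
  moreover have "\<beta> = ev (\<Sum>i<m. monom (a (2*i+1)) i) zz" unfolding \<beta>_def by (rule sum_to_ev)
  ultimately have "\<beta> = 0" using SQ by metis
  with \<open>\<alpha> = - ?w * \<beta>\<close> have "\<alpha> = 0" by simp
  have e: "\<forall>i<m. a (2*i) = 0" using LI[unfolded LI_def, rule_format, of "\<lambda>i. a (2*i)"] \<open>\<alpha> = 0\<close> unfolding \<alpha>_def by blast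
  have o: "\<forall>i<m. a (2*i+1) = 0" using LI[unfolded LI_def, rule_format, of "\<lambda>i. a (2*i+1)"] \<open>\<beta> = 0\<close> unfolding \<beta>_def by blast
  show "\<forall>j<2 ^ Suc K. a j = 0"
  proof (intro allI impI)
    fix j :: nat assume "j < 2^Suc K"
    hence "j div 2 < m" by simp
    moreover have "j = 2 * (j div 2) + j mod 2" by simp
    ultimately show "a j = 0" using e o
      by (metis mod2_eq_if add_0_right)
  qed
qed

end

lemma LI_all: "LI K"
proof (induction K)
  case 0
  show ?case unfolding LI_def by simp
next
  case (Suc K)
  then interpret lvl K by unfold_locales
  show ?case by (rule LI_Suc)
qed




lemma sq_sum_one:
  fixes c :: "nat \<Rightarrow> int"
  assumes "finite I" "(\<Sum>i\<in>I. (c i)^2) = 1"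
  shows "\<exists>j\<in>I. (c j = 1 \<or> c j = -1) \<and> (\<forall>i\<in>I. i \<noteq> j \<longrightarrow> c i = 0)"
proof -
  have "\<exists>j\<in>I. c j \<noteq> 0"
  proof (rule ccontr)
    assume "\<not> ?thesis"
    hence "(\<Sum>i\<in>I. (c i)^2) = 0" by simp
    with assms show False by simp
  qed
  then obtain j where j: "j \<in> I" "c j \<noteq> 0" by blast
  have split: "(\<Sum>i\<in>I. (c i)^2) = (c j)^2 + (\<Sum>i\<in>I - {j}. (c i)^2)"
    using assms(1) j(1) by (rule sum.remove)
  have "(c j)^2 > 0" using j(2) by simp
  hence ge1: "(c j)^2 \<ge> 1" by linarith
  have ge0: "(\<Sum>i\<in>I - {j}. (c i)^2) \<ge> 0" by (intro sum_nonneg) simp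
  have r0: "(\<Sum>i\<in>I - {j}. (c i)^2) = 0" and cj: "(c j)^2 = 1" using split assms(2) ge1 ge0 by linarith+
  have "\<forall>i\<in>I - {j}. (c i)^2 = 0"
    using r0 assms(1) by (subst (asm) sum_nonneg_eq_0_iff) auto
  hence "\<forall>i\<in>I. i \<noteq> j \<longrightarrow> c i = 0" by auto
  moreover from cj have "c j = 1 \<or> c j = -1" by (simp add: power2_eq_1_iff)
  ultimately show ?thesis using j(1) by blast
qed

context lvl begin

lemma cnj_zz_inv: "cnj zz = inverse zz"
  using z_norm[of "Suc K"] zz_nz
  by (metis complex_norm_square inverse_unique mult.commute of_real_1 power_one)

lemma zz_powi_ne1: assumes "e \<noteq> 0" "\<bar>e\<bar> < 2*m" shows "zz powi e \<noteq> 1"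
proof
  assume h: "zz powi e = 1"
  show False
  proof (cases "e > 0")
    case True
    hence "zz ^ nat e = 1" using h by (simp add: power_int_def)
    moreover have "0 < nat e" using True by auto
    moreover have lt: "e < int (2^Suc K)" using True assms(2) by simp
    have le: "0 \<le> e" using True by simp
    have "nat e < 2^Suc K" using nat_less_iff[OF le, of "2^Suc K"] lt by blast
    ultimately show False using z_pow_ne1 by blast
  next
    case False
    have "zz powi (-e) = 1" using h by (simp add: power_int_minus)
    hence "zz ^ nat (-e) = 1" using False by (simp add: power_int_def)
    moreover have "0 < nat (-e)" using False assms(1) by auto
    moreover have lt: "-e < int (2^Suc K)" using False assms(2) by simp
    have le: "0 \<le> -e" using False by simp
    have "nat (-e) < 2^Suc K" using nat_less_iff[OF le, of "2^Suc K"] lt by blast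
    ultimately show False using z_pow_ne1 by blast
  qed
qed

lemma orth:
  assumes "i < m" "j < m"
  shows "(\<Sum>s<m. (zz^(2*s+1))^i * cnj (zz^(2*s+1))^j) = (if i = j then of_nat m else 0)"
proof -
  define e where "e = int i - int j"
  have tm: "(zz^(2*s+1))^i * cnj (zz^(2*s+1))^j = zz powi e * (zz powi (2*e))^s" for s
  proof -
    have gen: "x^a * inverse x ^ b = x powi (int a - int b)" if "x \<noteq> 0" for x :: complex and a b
      using that by (simp add: power_int_diff power_inverse divide_inverse)
    have "(zz^(2*s+1))^i = zz^((2*s+1)*i)" by (simp only: power_mult)
    moreover have "cnj (zz^(2*s+1))^j = inverse zz ^((2*s+1)*j)"
      by (simp only: complex_cnj_power cnj_zz_inv power_mult)
    ultimately have "(zz^(2*s+1))^i * cnj (zz^(2*s+1))^j = zz powi (int ((2*s+1)*i) - int ((2*s+1)*j))"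
      using gen[OF zz_nz] by simp
    also have "int ((2*s+1)*i) - int ((2*s+1)*j) = e + (2*e) * int s"
      unfolding e_def by (simp add: algebra_simps)
    also have "zz powi (e + (2*e) * int s) = zz powi e * (zz powi (2*e))^s"
      using zz_nz by (simp add: power_int_add power_int_mult)
    finally show ?thesis .
  qed
  show ?thesis
  proof (cases "i = j")
    case True
    hence "e = 0" by (simp add: e_def)
    thus ?thesis using True unfolding tm by simp
  next
    case False
    hence e0: "2*e \<noteq> 0" by (simp add: e_def)
    have "int i < int m" "int j < int m" using assms by simp_all
    moreover have "int (2*m) = 2 * int m" by simp
    ultimately have "\<bar>2*e\<bar> < int (2*m)" unfolding e_def by arith
    hence "\<bar>2*e\<bar> < 2*m" by simp
    hence ne: "zz powi (2*e) \<noteq> 1" using zz_powi_ne1 e0 by blast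
    have "(zz powi (2*e))^m = (zz powi (2*e)) powi (int m)" by (rule power_int_of_nat[symmetric])
    also have "\<dots> = zz powi (2*e*int m)" by (rule power_int_mult[symmetric])
    also have "2*e*int m = int (2*m) * e" by simp
    also have "zz powi (int (2*m) * e) = (zz powi int (2*m)) powi e" by (rule power_int_mult)
    also have "\<dots> = 1" by (simp only: power_int_of_nat zz_2m power_int_1_left)
    finally have pm: "(zz powi (2*e))^m = 1" .
    have "(\<Sum>s<m. zz powi e * (zz powi (2*e))^s) = zz powi e * (\<Sum>s<m. (zz powi (2*e))^s)"
      by (simp add: sum_distrib_left)
    also have "(\<Sum>s<m. (zz powi (2*e))^s) = 0" using ne pm by (simp add: sum_gp_strict)
    finally show ?thesis using False unfolding tm by simp
  qed
qed

lemma UNIT: assumes "w = ev g zz" "w * cnj w = 1" shows "\<exists>j. w = zz ^ j"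
proof -
  obtain q r where qr: "g = D * q + r" "degree r < m" using reduce[OF m_pos, of g] by blast
  have wr: "w = ev r zz" using assms(1) qr(1) ev_D by simp
  define c where "c i = coeff r i" for i
  define r' where "r' = pcompose r (monom 1 (2*m-1))"
  have cw: "cnj w = ev r' zz" unfolding wr r'_def by (rule cnj_ev)
  have "ev (r*r' - 1) zz = 0" using assms(2) wr cw by simp
  hence nrm: "ev r (zz^t) * cnj (ev r (zz^t)) = 1" if "odd t" for t
  proof -
    assume "ev (r*r' - 1) zz = 0"
    from F10[OF that this] have "ev r (zz^t) * ev r' (zz^t) = 1" by simp
    moreover have "ev r' (zz^t) = ev r ((zz^t)^(2*m-1))" by (simp add: r'_def ev_pcompose)
    moreover have "(zz^t)^(2*m-1) = cnj (zz^t)"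
      by (simp add: cnj_zz power_mult[symmetric] mult.commute)
    moreover have "ev r (cnj zz ^ t) = cnj (ev r (zz^t))" using ev_cnj[of r "zz^t"] by simp
    ultimately show ?thesis by simp
  qed
  let ?x = "\<lambda>s. zz^(2*s+1)"
  have "(\<Sum>s<m. ev r (?x s) * cnj (ev r (?x s))) = of_nat m"
  proof -
    have "(\<Sum>s<m. ev r (?x s) * cnj (ev r (?x s))) = (\<Sum>s<m. 1)"
      by (rule sum.cong[OF refl], rule nrm, simp)
    thus ?thesis by simp
  qed
  moreover have "(\<Sum>s<m. ev r (?x s) * cnj (ev r (?x s))) = of_nat m * (\<Sum>i<m. of_int ((c i)^2))"
  proof -
    have "(\<Sum>s<m. ev r (?x s) * cnj (ev r (?x s)))
        = (\<Sum>s<m. \<Sum>i<m. \<Sum>j<m. of_int (c i * c j) * ((?x s)^i * cnj (?x s)^j))"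
    proof (rule sum.cong[OF refl])
      fix s
      have "ev r (?x s) * cnj (ev r (?x s)) = ev r (?x s) * ev r (cnj (?x s))" by (simp only: ev_cnj)
      also have "\<dots> = (\<Sum>i<m. of_int (c i) * (?x s)^i) * (\<Sum>j<m. of_int (c j) * (cnj (?x s))^j)"
        using ev_sum_coeff[OF qr(2)] c_def by simp
      also have "\<dots> = (\<Sum>i<m. \<Sum>j<m. of_int (c i * c j) * ((?x s)^i * cnj (?x s)^j))"
        by (simp add: sum_product algebra_simps)
      finally show "ev r (?x s) * cnj (ev r (?x s)) = \<dots>" .
    qed
    also have "\<dots> = (\<Sum>i<m. \<Sum>s<m. \<Sum>j<m. of_int (c i * c j) * ((?x s)^i * cnj (?x s)^j))"
      by (rule sum.swap)
    also have "\<dots> = (\<Sum>i<m. \<Sum>j<m. \<Sum>s<m. of_int (c i * c j) * ((?x s)^i * cnj (?x s)^j))"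
      by (rule sum.cong[OF refl], rule sum.swap)
    also have "\<dots> = (\<Sum>i<m. \<Sum>j<m. of_int (c i * c j) * (if i = j then of_nat m else 0))"
    proof (intro sum.cong refl)
      fix i j assume ij: "i \<in> {..<m}" "j \<in> {..<m}"
      have o: "(\<Sum>s<m. (?x s)^i * cnj (?x s)^j) = (if i = j then of_nat m else 0)"
        by (rule orth) (use ij in auto)
      show "(\<Sum>s<m. of_int (c i * c j) * ((?x s)^i * cnj (?x s)^j)) = of_int (c i * c j) * (if i = j then of_nat m else 0)"
        by (subst sum_distrib_left[symmetric], subst o, rule refl)
    qed
    also have "\<dots> = (\<Sum>i<m. of_int (c i * c i) * of_nat m)"
      by (intro sum.cong refl) (simp add: if_distrib cong: if_cong)
    also have "\<dots> = of_nat m * (\<Sum>i<m. of_int ((c i)^2))"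
      by (simp add: sum_distrib_left power2_eq_square algebra_simps)
    finally show ?thesis .
  qed
  ultimately have "of_nat m * (\<Sum>i<m. of_int ((c i)^2)) = (of_nat m :: complex)" by simp
  hence "(\<Sum>i<m. of_int ((c i)^2)) = (1::complex)" by simp
  hence "of_int (\<Sum>i<m. (c i)^2) = (of_int 1 :: complex)" by simp
  hence "(\<Sum>i<m. (c i)^2) = 1" by (simp only: of_int_eq_iff)
  from sq_sum_one[OF _ this] obtain j where j: "j < m" "c j = 1 \<or> c j = -1" "\<forall>i<m. i \<noteq> j \<longrightarrow> c i = 0"
    by auto
  have "w = (\<Sum>i<m. of_int (c i) * zz^i)" using wr ev_sum_coeff[OF qr(2)] c_def by simp
  also have "\<dots> = of_int (c j) * zz^j + (\<Sum>i\<in>{..<m}-{j}. of_int (c i) * zz^i)"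
    using j(1) by (subst sum.remove) auto
  also have "(\<Sum>i\<in>{..<m}-{j}. of_int (c i) * zz^i) = 0" using j(3) by (intro sum.neutral) auto
  finally have wj: "w = of_int (c j) * zz^j" by simp
  show ?thesis
  proof (cases "c j = 1")
    case True
    thus ?thesis using wj by auto
  next
    case False
    with j(2) have "c j = -1" by simp
    hence "w = zz^(j + m)" using wj zz_m by (simp add: power_add)
    thus ?thesis by blast
  qed
qed

end



context lvl begin

lemma cnj_pp: "cnj pp = - (zz^(2*m-1)) * pp"
proof -
  have "zz^(2*m-1) * zz = 1" using zz_2m by (metis power_Suc2 Suc_pred' m_pos mult_pos_pos zero_less_numeral)
  thus ?thesis by (simp add: cnj_zz algebra_simps)
qed

lemma REG: assumes "w = ev h zz" "w * cnj w = 2^n" "even n" shows "\<exists>j. w = 2^(n div 2) * zz ^ j"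
proof -
  have "w \<noteq> 0" using assms(2) by auto
  from F8[OF assms(1) this] obtain a u where au: "w = pp^a * ev u zz" "odd (poly u 1)" by blast
  define u' where "u' = pcompose u (monom 1 (2*m-1))"
  have cu: "cnj (ev u zz) = ev u' zz" unfolding u'_def by (rule cnj_ev)
  have pu': "poly u' 1 = poly u 1" unfolding u'_def by (rule poly_cmp1)
  define v where "v = u * u' * (- monom 1 (2*m-1))^a"
  have "cnj w = (cnj pp)^a * ev u' zz"
    using au(1) cu by (simp only: complex_cnj_mult complex_cnj_power)
  also have "(cnj pp)^a = (- (zz^(2*m-1)))^a * pp^a" by (simp only: cnj_pp power_mult_distrib)
  finally have "cnj w = (- (zz^(2*m-1)))^a * pp^a * ev u' zz" .
  moreover have ev_v: "ev v zz = ev u zz * ev u' zz * (- (zz^(2*m-1)))^a" by (simp add: v_def)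
  moreover have p2: "pp^(2*a) = pp^a * pp^a" by (simp only: mult_2 power_add)
  ultimately have wcw: "w * cnj w = pp^(2*a) * ev v zz"
    using au(1) by (simp only: ev_v p2) (simp add: algebra_simps)
  have ov: "odd (poly v 1)" using au(2) pu' by (simp add: v_def poly_monom)
  obtain y where y: "pp^m = 2 * ev y zz" "odd (poly y 1)" using F7 by blast
  define vy where "vy = v * y^n"
  have ovy: "odd (poly vy 1)" using ov y(2) by (simp add: vy_def)
  have key: "pp^(2*a) * ev vy zz = pp^(m*n)"
  proof -
    have "pp^(m*n) = 2^n * (ev y zz)^n" by (simp add: power_mult y(1) power_mult_distrib)
    also have "\<dots> = pp^(2*a) * ev vy zz" using wcw assms(2) by (simp add: vy_def)
    finally show ?thesis by simp
  qed
  have "2*a = m*n"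
  proof (rule ccontr)
    assume ne: "2*a \<noteq> m*n"
    show False
    proof (cases "2*a < m*n")
      case True
      define d where "d = m*n - 2*a"
      have "d > 0" "m*n = 2*a + d" using True by (auto simp: d_def)
      hence "pp^(2*a) * ev vy zz = pp^(2*a) * pp^d" using key by (simp add: power_add)
      hence "ev vy zz = pp^d" using pp_nz by simp
      also have "\<dots> = pp * ev (P^(d-1)) zz" using \<open>d > 0\<close>
        by (simp add: power_Suc[symmetric] del: power_Suc)
      finally have "even (poly vy 1)" by (rule F5)
      with ovy show False by simp
    next
      case False
      with ne have lt: "m*n < 2*a" by simp
      define d where "d = 2*a - m*n"
      have "d > 0" "2*a = m*n + d" using lt by (auto simp: d_def)
      hence "pp^(m*n) * (pp^d * ev vy zz) = pp^(m*n) * 1" using key by (simp add: power_add mult.assoc)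
      hence "pp^d * ev vy zz = 1" using pp_nz by simp
      moreover have pd: "pp^d = pp * pp^(d-1)" using \<open>d > 0\<close> by (cases d) auto
      ultimately have "ev 1 zz = pp * ev (P^(d-1) * vy) zz" by (simp add: mult.assoc)
      hence "even (poly (1::int poly) 1)" by (rule F5)
      thus False by simp
    qed
  qed
  define n' where "n' = n div 2"
  have n': "n = 2*n'" using assms(3) by (simp add: n'_def)
  have a': "a = m*n'" using \<open>2*a = m*n\<close> n' by simp
  define G where "G = ev (y^n' * u) zz"
  have wG: "w = 2^n' * G"
    using au(1) a' y(1) by (simp add: G_def power_mult power_mult_distrib)
  have "w * cnj w = (2^n' * 2^n') * (G * cnj G)" using wG by simp
  hence "(2^n' * 2^n') * (G * cnj G) = (2^n' * 2^n' :: complex) * 1"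
    using assms(2) n' by (simp add: power_add[symmetric] mult_2)
  hence "G * cnj G = 1" by simp
  from UNIT[OF G_def this] obtain j where "G = zz^j" by blast
  with wG show ?thesis unfolding n'_def by blast
qed

end



lemma norm_from_sq: assumes "F * cnj F = of_real (r^2)" "r \<ge> 0" shows "cmod F = r"
proof -
  have "of_real ((cmod F)^2) = (of_real (r^2) :: complex)" using assms(1) complex_norm_square[of F] by simp
  hence "(cmod F)^2 = r^2" using of_real_eq_iff by blast
  thus ?thesis using assms(2) by (simp add: power2_eq_iff_nonneg)
qed

lemma comb_sq:
  fixes \<zeta> A B F R T :: complex
  assumes z: "\<zeta> * cnj \<zeta> = 1" and e: "2*F = (1+\<zeta>)*A + (1-\<zeta>)*B"
    and a: "A * cnj A = R" and b: "B * cnj B = R" and t1: "cnj A * B = T" and t2: "A * cnj B = T"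
  shows "F * cnj F = R"
proof -
  have "4 * (F * cnj F) = (2*F) * cnj (2*F)" by simp
  also have "\<dots> = ((1+\<zeta>)*A + (1-\<zeta>)*B) * ((1+cnj \<zeta>)*cnj A + (1 - cnj \<zeta>)*cnj B)" unfolding e by simp
  also have "\<dots> = (1+\<zeta>)*(1+cnj \<zeta>)*(A*cnj A) + (1+\<zeta>)*(1-cnj \<zeta>)*(A*cnj B)
      + (1-\<zeta>)*(1+cnj \<zeta>)*(cnj A * B) + (1-\<zeta>)*(1-cnj \<zeta>)*(B*cnj B)" by (simp add: algebra_simps)
  also have "\<dots> = (2 + 2*(\<zeta>*cnj \<zeta>))*R + (2 - 2*(\<zeta>*cnj \<zeta>))*T"
    unfolding a b t1 t2 by (simp add: algebra_simps)
  also have "\<dots> = 4*R" unfolding z by simp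
  finally show ?thesis by simp
qed

lemma powi_mod: assumes "c ^ N = 1" "(c::complex) \<noteq> 0" shows "c powi (a mod int N) = c powi a"
proof -
  have "a = int N * (a div int N) + a mod int N" by simp
  hence "c powi a = c powi (int N * (a div int N)) * c powi (a mod int N)"
    using assms(2) by (metis power_int_add)
  also have "c powi (int N * (a div int N)) = 1"
    by (simp add: power_int_mult assms(1))
  finally show ?thesis by simp
qed

lemma walsh_mem: assumes "\<forall>x\<in>S. 0 \<le> \<phi> x"
  shows "\<exists>p. (\<Sum>x\<in>S. c powi \<phi> x * (-1)^(d x)) = ev p c"
proof -
  have "(\<Sum>x\<in>S. c powi \<phi> x * (-1)^(d x)) = (\<Sum>x\<in>S. ev (monom ((-1)^(d x)) (nat (\<phi> x))) c)"
  proof (rule sum.cong[OF refl])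
    fix x assume "x \<in> S"
    hence "c powi \<phi> x = c ^ nat (\<phi> x)" using assms by (simp add: power_int_def)
    thus "c powi \<phi> x * (-1)^(d x) = ev (monom ((-1)^(d x)) (nat (\<phi> x))) c" by simp
  qed
  also have "\<dots> = ev (\<Sum>x\<in>S. monom ((-1)^(d x)) (nat (\<phi> x))) c" by (simp add: ev_sum)
  finally show ?thesis by blast
qed




theorem mainTheorem14:
  fixes n k :: nat and f g h :: "bool list \<Rightarrow> int"
  assumes k: "k \<ge> 2"
    and g: "\<forall>x\<in>vecs n. g x \<in> {0, 1}"
    and h: "\<forall>x\<in>vecs n. h x \<in> {0..<2 ^ (k - 1)}"
    and f: "\<forall>x\<in>vecs n. f x = (g x + 2 * h x) mod 2 ^ k"
  defines "hg \<equiv> (\<lambda>x. (h x + 2 ^ (k - 2) * g x) mod 2 ^ (k - 1))"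
  defines "ii \<equiv> gbent n (2 ^ (k - 1)) h \<and> gbent n (2 ^ (k - 1)) hg \<and>
      (\<forall>u\<in>vecs n. Im (cnj (walsh n (2 ^ (k - 1)) h u) * walsh n (2 ^ (k - 1)) hg u) = 0)"
  shows "(even n \<longrightarrow> (gbent n (2 ^ k) f \<longleftrightarrow> ii)) \<and> (odd n \<longrightarrow> (ii \<longrightarrow> gbent n (2 ^ k) f))"
proof -
  define K where "K = k - 2"
  have kK: "k = Suc (Suc K)" using k K_def by simp
  interpret L1: lvl "Suc K" by unfold_locales (rule LI_all)
  interpret L0: lvl K by unfold_locales (rule LI_all)
  define \<zeta> where "\<zeta> = z (Suc (Suc K))"
  define \<omega> where "\<omega> = z (Suc K)"
  have zk: "zeta (2^k) = \<zeta>" by (simp add: \<zeta>_def z_def kK)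
  have wk: "zeta (2^(k-1)) = \<omega>" by (simp add: \<omega>_def z_def kK)
  have k2: "(2::int)^(k-2) = 2^K" by (simp add: kK)
  have zw: "\<zeta>^2 = \<omega>" unfolding \<zeta>_def \<omega>_def by (rule z_sq)
  have znz: "\<zeta> \<noteq> 0" unfolding \<zeta>_def by (rule z_nz)
  have wnz: "\<omega> \<noteq> 0" unfolding \<omega>_def by (rule z_nz)
  have zord: "\<zeta>^(2^k) = 1" unfolding \<zeta>_def kK by (rule z_order)
  have word: "\<omega>^(2^(k-1)) = 1" unfolding \<omega>_def kK using L0.zz_2m by simp
  have whalf: "\<omega>^(2^K) = -1" unfolding \<omega>_def by (rule z_half)
  have zcz: "\<zeta> * cnj \<zeta> = 1" using z_norm[of "Suc (Suc K)"] unfolding \<zeta>_def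
    by (metis complex_norm_square of_real_1 power_one)
  have wcw: "\<omega> * cnj \<omega> = 1" using z_norm[of "Suc K"] unfolding \<omega>_def
    by (metis complex_norm_square of_real_1 power_one)
  define F where "F u = walsh n (2^k) f u" for u
  define A where "A u = walsh n (2^(k-1)) h u" for u
  define B where "B u = walsh n (2^(k-1)) hg u" for u
  have Fs: "F u = (\<Sum>x\<in>vecs n. \<zeta> powi f x * (-1)^(dotp u x))" for u
    unfolding F_def walsh_def zk ..
  have As: "A u = (\<Sum>x\<in>vecs n. \<omega> powi h x * (-1)^(dotp u x))" for u
    unfolding A_def walsh_def wk ..
  have Bs: "B u = (\<Sum>x\<in>vecs n. \<omega> powi hg x * (-1)^(dotp u x))" for u
    unfolding B_def walsh_def wk ..
  have fpos: "\<forall>x\<in>vecs n. 0 \<le> f x" using f by simp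
  have hpos: "\<forall>x\<in>vecs n. 0 \<le> h x" using h by simp
  have hgpos: "\<forall>x\<in>vecs n. 0 \<le> hg x" unfolding hg_def by simp
  have Fm: "\<exists>p. F u = ev p \<zeta>" for u unfolding Fs by (rule walsh_mem[OF fpos])
  have Am: "\<exists>p. A u = ev p \<omega>" for u unfolding As by (rule walsh_mem[OF hpos])
  have Bm: "\<exists>p. B u = ev p \<omega>" for u unfolding Bs by (rule walsh_mem[OF hgpos])
  have pt: "2 * \<zeta> powi f x = (1+\<zeta>) * \<omega> powi h x + (1-\<zeta>) * \<omega> powi hg x" if x: "x \<in> vecs n" for x
  proof -
    have "\<zeta> powi f x = \<zeta> powi (g x + 2 * h x)"
      using f x powi_mod[OF zord znz, of "g x + 2 * h x"] by simp
    also have "\<dots> = \<zeta> powi g x * \<omega> powi h x"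
      using znz by (simp add: power_int_add power_int_mult zw[symmetric])
    finally have e1: "\<zeta> powi f x = \<zeta> powi g x * \<omega> powi h x" .
    have "\<omega> powi hg x = \<omega> powi (h x + 2^K * g x)"
      using powi_mod[OF word wnz, of "h x + 2^K * g x"] unfolding hg_def k2 by simp
    also have "\<dots> = \<omega> powi h x * (-1) powi g x"
    proof -
      have "\<omega> powi (int (2^K)) = \<omega>^(2^K)" by (rule power_int_of_nat)
      hence w2K: "\<omega> powi ((2::int)^K) = -1" using whalf by simp
      show ?thesis using wnz by (simp add: power_int_add power_int_mult w2K)
    qed
    finally have e2: "\<omega> powi hg x = \<omega> powi h x * (-1) powi g x" .
    from g x have "g x = 0 \<or> g x = 1" by auto
    thus ?thesis
    proof
      assume "g x = 0" thus ?thesis using e1 e2 by (simp add: algebra_simps)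
    next
      assume "g x = 1" thus ?thesis using e1 e2 by (simp add: algebra_simps)
    qed
  qed
  have dec: "2 * F u = (1+\<zeta>) * A u + (1-\<zeta>) * B u" for u
  proof -
    have "2 * F u = (\<Sum>x\<in>vecs n. (2 * \<zeta> powi f x) * (-1)^(dotp u x))"
      unfolding Fs by (simp add: sum_distrib_left mult.assoc)
    also have "\<dots> = (\<Sum>x\<in>vecs n. ((1+\<zeta>) * \<omega> powi h x + (1-\<zeta>) * \<omega> powi hg x) * (-1)^(dotp u x))"
      by (rule sum.cong[OF refl]) (simp add: pt)
    also have "\<dots> = (\<Sum>x\<in>vecs n. (1+\<zeta>) * (\<omega> powi h x * (-1)^(dotp u x)) + (1-\<zeta>) * (\<omega> powi hg x * (-1)^(dotp u x)))"
      by (rule sum.cong[OF refl]) (simp add: algebra_simps)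
    also have "\<dots> = (1+\<zeta>) * A u + (1-\<zeta>) * B u"
      unfolding As Bs by (simp only: sum.distrib sum_distrib_left)
    finally show ?thesis .
  qed
  have sq: "(2 powr (real n / 2))^2 = 2^n"
  proof -
    have "(2 powr (real n / 2))^2 = 2 powr (real n / 2) * 2 powr (real n / 2)"
      by (simp only: power2_eq_square)
    also have "\<dots> = 2 powr (real n / 2 + real n / 2)" by (simp only: powr_add)
    also have "\<dots> = 2^n" by (simp add: powr_realpow)
    finally show ?thesis .
  qed
  have sqc: "(of_real ((2 powr (real n / 2))^2) :: complex) = 2^n" by (simp only: sq) simp
  have r0: "2 powr (real n / 2) \<ge> 0" by simp
  have ii_i: "ii \<Longrightarrow> gbent n (2^k) f"
  proof -
    assume ii: ii
    show ?thesis unfolding gbent_def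
    proof
      fix u assume u: "u \<in> vecs n"
      let ?r = "2 powr (real n / 2)"
      have a: "cmod (A u) = ?r" using ii u unfolding ii_def gbent_def A_def by blast
      have b: "cmod (B u) = ?r" using ii u unfolding ii_def gbent_def B_def by blast
      have im: "Im (cnj (A u) * B u) = 0" using ii u unfolding ii_def A_def B_def by blast
      define T where "T = cnj (A u) * B u"
      have treal: "cnj T = T" using im unfolding T_def by (simp add: complex_eq_iff algebra_simps)
      have "F u * cnj (F u) = of_real (?r^2)"
      proof (rule comb_sq[OF zcz dec])
        show "A u * cnj (A u) = of_real (?r^2)" using complex_norm_square[of "A u"] a by simp
        show "B u * cnj (B u) = of_real (?r^2)" using complex_norm_square[of "B u"] b by simp
        show "cnj (A u) * B u = T" by (simp add: T_def)
        show "A u * cnj (B u) = T" using treal unfolding T_def by (simp add: mult.commute)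
      qed
      thus "cmod (walsh n (2^k) f u) = ?r" using norm_from_sq r0 unfolding F_def by blast
    qed
  qed
  have i_ii: "even n \<Longrightarrow> gbent n (2^k) f \<Longrightarrow> ii"
  proof -
    assume ev_n: "even n" and gb: "gbent n (2^k) f"
    define N where "N = (2::complex)^(n div 2)"
    have rN: "2 powr (real n / 2) = 2^(n div 2)"
    proof -
      have "real n / 2 = real (n div 2)" using ev_n by (auto elim!: evenE)
      thus ?thesis by (simp add: powr_realpow)
    qed
    have cN: "cmod N = 2 powr (real n / 2)" unfolding N_def rN by (simp add: norm_power)
    have key: "\<exists>i. (A u = N * \<omega>^i \<and> B u = N * \<omega>^i) \<or> (A u = N * \<omega>^i \<and> B u = - (N * \<omega>^i))"
      if u: "u \<in> vecs n" for u
    proof -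
      have "cmod (F u) = 2 powr (real n / 2)" using gb u unfolding gbent_def F_def by blast
      hence "F u * cnj (F u) = 2^n" using complex_norm_square[of "F u"] sqc by simp
      moreover obtain p where p: "F u = ev p \<zeta>" using Fm by blast
      ultimately obtain j where j: "F u = 2^(n div 2) * \<zeta>^j"
        using L1.REG[of "F u" p n] ev_n unfolding \<zeta>_def by auto
      obtain pa where pa: "A u = ev pa \<omega>" using Am by blast
      obtain pb where pb: "B u = ev pb \<omega>" using Bm by blast
      have dd: "(A u + B u) + \<zeta> * (A u - B u) = 2 * N * \<zeta>^j"
        using dec[of u] j unfolding N_def by (simp add: algebra_simps)
      have indep: "\<alpha> = 0 \<and> \<beta> = 0" if "\<alpha> + \<zeta> * \<beta> = 0" "\<alpha> = ev pa' \<omega>" "\<beta> = ev pb' \<omega>" for \<alpha> \<beta> pa' pb'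
      proof -
        have "\<alpha> = - \<zeta> * \<beta>" using that(1) by (simp add: eq_neg_iff_add_eq_0)
        hence "\<alpha>^2 = \<omega> * \<beta>^2" by (simp add: power_mult_distrib zw)
        hence "\<beta> = 0" using L0.SQ[of pa' pb'] that(2,3) unfolding \<omega>_def by simp
        with \<open>\<alpha> = - \<zeta> * \<beta>\<close> show ?thesis by simp
      qed
      show ?thesis
      proof (cases "even j")
        case True
        define i where "i = j div 2"
        have "\<zeta>^j = \<omega>^i" using True unfolding i_def zw[symmetric] by (simp add: power_mult[symmetric])
        hence "(A u + B u - 2 * N * \<omega>^i) + \<zeta> * (A u - B u) = 0" using dd by (simp add: algebra_simps)
        moreover have "A u + B u - 2 * N * \<omega>^i = ev (pa + pb - smult (2 * 2^(n div 2)) (monom 1 i)) \<omega>"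
          unfolding pa pb N_def by simp
        moreover have "A u - B u = ev (pa - pb) \<omega>" unfolding pa pb by simp
        ultimately have "A u + B u - 2 * N * \<omega>^i = 0 \<and> A u - B u = 0" using indep by blast
        hence h0: "A u + B u - 2 * N * \<omega>^i = 0" "A u - B u = 0" by auto
        have h2: "B u = A u" using h0(2) by simp
        have "A u + B u = 2 * N * \<omega>^i" using h0(1) by simp
        hence "A u + A u = 2 * N * \<omega>^i" by (simp only: h2)
        hence "2 * A u = 2 * N * \<omega>^i" by (simp only: mult_2)
        hence "A u = N * \<omega>^i" by (simp add: mult.assoc)
        hence "A u = N * \<omega>^i \<and> B u = N * \<omega>^i" using h2 by simp
        thus ?thesis by blast
      next
        case False
        define i where "i = j div 2"
        have "\<zeta>^j = \<zeta> * \<omega>^i" using False unfolding i_def zw[symmetric]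
          by (metis odd_two_times_div_two_succ power_mult power_Suc mult.commute add.commute plus_1_eq_Suc)
        hence "(A u + B u) + \<zeta> * (A u - B u - 2 * N * \<omega>^i) = 0" using dd by (simp add: algebra_simps)
        moreover have "A u - B u - 2 * N * \<omega>^i = ev (pa - pb - smult (2 * 2^(n div 2)) (monom 1 i)) \<omega>"
          unfolding pa pb N_def by simp
        moreover have "A u + B u = ev (pa + pb) \<omega>" unfolding pa pb by simp
        ultimately have "A u + B u = 0 \<and> A u - B u - 2 * N * \<omega>^i = 0" using indep by blast
        hence h0: "A u + B u = 0" "A u - B u - 2 * N * \<omega>^i = 0" by auto
        have h1: "B u = - A u" using h0(1) by (simp add: eq_neg_iff_add_eq_0 add.commute)
        have "A u - B u = 2 * N * \<omega>^i" using h0(2) by simp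
        hence "A u + A u = 2 * N * \<omega>^i" by (simp only: h1 diff_minus_eq_add)
        hence "2 * A u = 2 * N * \<omega>^i" by (simp only: mult_2)
        hence "A u = N * \<omega>^i" by (simp add: mult.assoc)
        hence "A u = N * \<omega>^i \<and> B u = - (N * \<omega>^i)" using h1 by simp
        thus ?thesis by blast
      qed
    qed
    have nw: "cmod (\<omega>^i) = 1" for i unfolding \<omega>_def by (simp add: norm_power z_norm)
    have wi: "cnj (\<omega>^i) * \<omega>^i = 1" for i using wcw by (simp add: mult.commute power_mult_distrib[symmetric])
    show ii unfolding ii_def gbent_def
    proof (intro conjI ballI)
      fix u assume u: "u \<in> vecs n"
      from key[OF u] obtain i where i: "(A u = N * \<omega>^i \<and> B u = N * \<omega>^i) \<or> (A u = N * \<omega>^i \<and> B u = - (N * \<omega>^i))" by blast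
      show "cmod (walsh n (2 ^ (k - 1)) h u) = 2 powr (real n / 2)"
        using i cN nw unfolding A_def[symmetric] by (auto simp: norm_mult)
      show "cmod (walsh n (2 ^ (k - 1)) hg u) = 2 powr (real n / 2)"
        using i cN nw unfolding B_def[symmetric] by (auto simp: norm_mult)
      have "cnj N = N" unfolding N_def by simp
      hence cA: "cnj (A u) = N * cnj (\<omega>^i)" using i by auto
      have X: "cnj (A u) * (N * \<omega>^i) = N * N" unfolding cA using wi[of i]
        by (metis mult.assoc mult.left_commute mult_1_right)
      have "B u = N * \<omega>^i \<or> B u = - (N * \<omega>^i)" using i by blast
      hence "cnj (A u) * B u = N * N \<or> cnj (A u) * B u = - (N * N)"
      proof
        assume "B u = N * \<omega>^i" thus ?thesis by (intro disjI1) (simp only: X)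
      next
        assume "B u = - (N * \<omega>^i)" thus ?thesis by (intro disjI2) (simp only: X mult_minus_right)
      qed
      moreover have I1: "Im (N * N) = 0" unfolding N_def by simp
      moreover have I2: "Im (- (N * N)) = 0" unfolding N_def by simp
      ultimately have "Im (cnj (A u) * B u) = 0" by (elim disjE) (simp only: I1 I2)+
      thus "Im (cnj (walsh n (2 ^ (k - 1)) h u) * walsh n (2 ^ (k - 1)) hg u) = 0"
        unfolding A_def B_def .
    qed
  qed
  show ?thesis using ii_i i_ii by blast
qed


end
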